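(* Let $p,q$ be distinct primes, $m>1$ an integer, and $S=\{p^kq^l: 0\le k,l\le m-1\}$ (so $|S|=m^2$). Then $i_-([S])=2m-2$ and $i_+([S])=(m-1)^2+1$; in particular $i_+([S])/|S|\to 1$ as $m\to\infty$.
   Context: The LCM matrix $[S]$ of $S=\{x_1,\dots,x_n\}$ has $(i,j)$ entry $\mathrm{lcm}(x_i,x_j)$; $i_+(M)$ and $i_-(M)$ denote the numbers of positive and negative eigenvalues (with multiplicity) of a real symmetric matrix $M$. *)

theory Defs
  imports Main "HOL-Computational_Algebra.Polynomial" "Jordan_Normal_Form.Char_Poly"
begin

text \<open>LCM matrix of a finite set S of positive integers, rows/columns indexed by
  the elements of S in increasing order (inertia does not depend on the ordering).\<close>
definition lcm_matrix :: "nat set \<Rightarrow> real mat" where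
  "lcm_matrix S = (let xs = sorted_list_of_set S in
     mat (length xs) (length xs) (\<lambda>(i,j). real (lcm (xs ! i) (xs ! j))))"

text \<open>For real symmetric
  matrices the characteristic polynomial splits over the reals.\<close>
definition pos_inertia :: "real mat \<Rightarrow> nat" where
  "pos_inertia M = size (filter_mset (\<lambda>x. x > 0) (proots (char_poly M)))"

definition neg_inertia :: "real mat \<Rightarrow> nat" where
  "neg_inertia M = size (filter_mset (\<lambda>x. x < 0) (proots (char_poly M)))"

definition pq_set :: "nat \<Rightarrow> nat \<Rightarrow> nat \<Rightarrow> nat set" where
  "pq_set p q m = {p ^ k * q ^ l | k l. k \<le> m - 1 \<and> l \<le> m - 1}"

end

theory Submission
  imports Defs "HOL-Real_Asymp.Real_Asymp"
begin



lemma real_sym_has_root: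
  fixes H :: "real mat"
  assumes H: "H \<in> carrier_mat n n" and sym: "transpose_mat H = H" and n: "n > 0"
  shows "\<exists>r. poly (char_poly H) r = 0"
proof -
  let ?HC = "map_mat complex_of_real H"
  have HC: "?HC \<in> carrier_mat n n" using H by simp
  have cp: "char_poly ?HC = map_poly complex_of_real (char_poly H)"
    by (rule of_real_hom.char_poly_hom[OF H])
  obtain as where as: "char_poly ?HC = (\<Prod> a \<leftarrow> as. [:- a, 1:])" "length as = n"
    using char_poly_factorized[OF HC] by blast
  define a where "a = as ! 0"
  have "a \<in> set as" using as(2) n unfolding a_def by simp
  hence "poly (char_poly ?HC) a = 0" unfolding as(1)
    by (induct as) auto
  hence "eigenvalue ?HC a" using eigenvalue_root_char_poly[OF HC] by simp
  then obtain v where ev: "eigenvector ?HC v a" unfolding eigenvalue_def by blast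
  hence v: "v \<in> carrier_vec n" "v \<noteq> 0\<^sub>v n" "?HC *\<^sub>v v = a \<cdot>\<^sub>v v"
    unfolding eigenvector_def using HC by auto
  define s where "s = (\<Sum>i<n. \<Sum>j<n. cnj (v$i) * complex_of_real (H$$(i,j)) * v$j)"
  define t where "t = (\<Sum>i<n. cnj (v$i) * v$i)"
  have hv: "(\<Sum>j<n. complex_of_real (H$$(i,j)) * v$j) = a * v$i" if i: "i < n" for i
  proof -
    have e: "(?HC *\<^sub>v v)$i = (a \<cdot>\<^sub>v v)$i" using v(3) by simp
    have "(?HC *\<^sub>v v)$i = (\<Sum>j<n. complex_of_real (H$$(i,j)) * v$j)"
      using i v(1) H by (simp add: scalar_prod_def lessThan_atLeast0)
    moreover have "(a \<cdot>\<^sub>v v)$i = a * v$i" using i v by simp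
    ultimately show ?thesis using e by simp
  qed
  have "s = (\<Sum>i<n. cnj (v$i) * (a * v$i))"
    unfolding s_def
  proof (intro sum.cong refl)
    fix i assume "i \<in> {..<n}"
    hence "(\<Sum>j<n. cnj (v$i) * complex_of_real (H$$(i,j)) * v$j) = cnj (v$i) * (\<Sum>j<n. complex_of_real (H$$(i,j)) * v$j)"
      by (simp add: sum_distrib_left mult.assoc)
    thus "(\<Sum>j<n. cnj (v$i) * complex_of_real (H$$(i,j)) * v$j) = cnj (v$i) * (a * v$i)"
      using hv \<open>i \<in> {..<n}\<close> by simp
  qed
  also have "\<dots> = a * t" unfolding t_def
    by (auto simp: sum_distrib_left intro!: sum.cong)
  finally have st: "s = a * t" .
  have "cnj s = (\<Sum>i<n. \<Sum>j<n. v$i * complex_of_real (H$$(i,j)) * cnj (v$j))"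
    unfolding s_def by (simp add: mult.commute)
  also have "\<dots> = (\<Sum>j<n. \<Sum>i<n. v$i * complex_of_real (H$$(i,j)) * cnj (v$j))"
    by (rule sum.swap)
  also have "\<dots> = s" unfolding s_def
  proof (intro sum.cong refl)
    fix j i assume "j \<in> {..<n}" "i \<in> {..<n}"
    hence "H$$(i,j) = H$$(j,i)" using H sym
      by (metis carrier_matD(1) carrier_matD(2) index_transpose_mat(1) lessThan_iff)
    thus "v$i * complex_of_real (H$$(i,j)) * cnj (v$j) = cnj (v$j) * complex_of_real (H$$(j,i)) * v$i"
      by simp
  qed
  finally have sreal: "Im s = 0" by (metis cnj.simps(2) neg_equal_zero)
  have tre: "t = complex_of_real (\<Sum>i<n. (cmod (v$i))^2)"
    unfolding t_def of_real_sum by (intro sum.cong refl) (metis complex_norm_square mult.commute of_real_power)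
  obtain i where i: "i < n" "v$i \<noteq> 0" using v
    by (metis eq_vecI carrier_vecD index_zero_vec(1) index_zero_vec(2))
  have "(\<Sum>i<n. (cmod (v$i))^2) > 0"
    by (rule sum_pos2[of _ i]) (use i in auto)
  hence tpos: "t \<noteq> 0" "Im t = 0" unfolding tre
    by (metis less_irrefl of_real_eq_0_iff, simp)
  have "Im a = 0"
  proof -
    have "Im s = Re a * Im t + Im a * Re t" using st by simp
    hence "Im a * Re t = 0" using sreal tpos by simp
    moreover have "Re t \<noteq> 0" using tpos complex_eq_iff by auto
    ultimately show ?thesis by simp
  qed
  hence aeq: "a = complex_of_real (Re a)" by (simp add: complex_eq_iff)
  have "complex_of_real (poly (char_poly H) (Re a)) = poly (char_poly ?HC) a"
    unfolding cp by (subst aeq) simp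
  with \<open>poly (char_poly ?HC) a = 0\<close> show ?thesis by auto
qed



lemma householder:
  fixes w :: "real vec"
  assumes w: "w \<in> carrier_vec n" and ww: "w \<bullet> w = 1" and n: "n > 0"
  shows "\<exists>W \<in> carrier_mat n n. transpose_mat W * W = 1\<^sub>m n \<and> col W 0 = w"
proof -
  define u where "u = unit_vec n 0 - w"
  have u: "u \<in> carrier_vec n" unfolding u_def using w by simp
  have ui: "u $ i = (if i = 0 then 1 else 0) - w $ i" if "i < n" for i
    unfolding u_def using w that by simp
  have ww': "(\<Sum>k = 0..<n. w$k * w$k) = 1" using ww w by (simp add: scalar_prod_def)
  have uu: "u \<bullet> u = 2 * u $ 0"
  proof -
    have "u \<bullet> u = (\<Sum>k = 0..<n. ((if k = 0 then 1 else 0) - w $ k) * ((if k = 0 then 1 else 0) - w $ k))"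
      using u by (simp add: scalar_prod_def ui)
    also have "\<dots> = (\<Sum>k = 0..<n. (if k = 0 then 1 - 2 * w$k else 0) + w$k * w$k)"
      by (intro sum.cong refl) (auto simp: algebra_simps)
    also have "\<dots> = 1 - 2 * w$0 + 1" using n ww' by (simp add: sum.distrib)
    also have "\<dots> = 2 * u $ 0" using ui[OF n] by simp
    finally show ?thesis .
  qed
  show ?thesis
  proof (cases "u \<bullet> u = 0")
    case True
    hence "u $ 0 = 0" using uu by simp
    hence "w $ 0 = 1" using ui[OF n] by simp
    have "(\<Sum>k = 0..<n. u$k * u$k) = 0" using True u by (simp add: scalar_prod_def)
    hence "\<forall>k \<in> {0..<n}. u$k * u$k = 0"
      by (subst sum_nonneg_eq_0_iff[symmetric]) auto
    hence "w = unit_vec n 0" using w ui by (intro eq_vecI) (auto simp: unit_vec_def)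
    thus ?thesis by (intro bexI[of _ "1\<^sub>m n"]) (auto simp: n)
  next
    case False
    define c where "c = 2 / (u \<bullet> u)"
    define W where "W = mat n n (\<lambda>(i,j). (if i = j then 1 else 0) - c * u$i * u$j)"
    have W: "W \<in> carrier_mat n n" unfolding W_def by simp
    have uu': "(\<Sum>k = 0..<n. u$k * u$k) = u \<bullet> u" using u by (simp add: scalar_prod_def)
    have cuu: "c * c * (u \<bullet> u) = 2 * c" unfolding c_def using False by (simp add: field_simps)
    have "transpose_mat W * W = 1\<^sub>m n"
    proof (rule eq_matI)
      fix i j assume i: "i < dim_row (1\<^sub>m n)" and j: "j < dim_col (1\<^sub>m n)"
      hence i: "i < n" and j: "j < n" by auto
      have "(transpose_mat W * W) $$ (i,j) = (\<Sum>k = 0..<n. W$$(k,i) * W$$(k,j))"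
        using W i j by (simp add: scalar_prod_def)
      also have "\<dots> = (\<Sum>k = 0..<n. ((if k = i then 1 else 0) - c * u$k * u$i) * ((if k = j then 1 else 0) - c * u$k * u$j))"
        unfolding W_def using i j by (intro sum.cong refl) auto
      also have "\<dots> = (\<Sum>k = 0..<n. (if k = i then (if k = j then 1 else 0) else 0)
            - (if k = i then c * u$k * u$j else 0) - (if k = j then c * u$k * u$i else 0)
            + c * c * u$i * u$j * (u$k * u$k))"
        by (intro sum.cong refl) (auto simp: algebra_simps)
      also have "\<dots> = (if i = j then 1 else 0) - c * u$i * u$j - c * u$j * u$i + c * c * u$i * u$j * (u \<bullet> u)"
        using i j by (simp add: sum.distrib sum_subtractf sum_distrib_left[symmetric] uu')
      also have "\<dots> = (if i = j then 1 else 0)"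
        using cuu by (simp add: algebra_simps) blast
      finally show "(transpose_mat W * W) $$ (i,j) = 1\<^sub>m n $$ (i,j)" using i j by simp
    qed (use W in auto)
    moreover have "col W 0 = w"
    proof (rule eq_vecI)
      fix i assume "i < dim_vec w"
      hence i: "i < n" using w by simp
      have "c * u $ 0 = 1" unfolding c_def uu using False uu by simp
      hence "col W 0 $ i = (if i = 0 then 1 else 0) - u$i"
        unfolding W_def using i n by (simp add: algebra_simps)
      thus "col W 0 $ i = w $ i" using ui[OF i] by simp
    qed (use W w in auto)
    ultimately show ?thesis using W by blast
  qed
qed



definition diagm :: "nat \<Rightarrow> real list \<Rightarrow> real mat" where
  "diagm n es = mat n n (\<lambda>(i,j). if i = j then es ! i else 0)"

lemma self_scalar_pos:
  fixes v :: "real vec"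
  assumes v: "v \<in> carrier_vec n" "v \<noteq> 0\<^sub>v n"
  shows "v \<bullet> v > 0"
proof -
  obtain i where i: "i < n" "v$i \<noteq> 0" using v
    by (metis eq_vecI carrier_vecD index_zero_vec(1) index_zero_vec(2))
  have "(\<Sum>k = 0..<n. v$k * v$k) > 0"
    by (rule sum_pos2[of _ i]) (use i in \<open>auto simp: not_real_square_gt_zero, metis not_real_square_gt_zero\<close>)
  thus ?thesis using v by (simp add: scalar_prod_def)
qed

lemma spectral:
  fixes H :: "real mat"
  assumes "H \<in> carrier_mat n n" and "transpose_mat H = H"
  shows "\<exists>U es. U \<in> carrier_mat n n \<and> length es = n \<and> transpose_mat U * U = 1\<^sub>m n
     \<and> transpose_mat U * H * U = diagm n es"
  using assms
proof (induct n arbitrary: H)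
  case 0
  show ?case
    by (rule exI[of _ "1\<^sub>m 0"], rule exI[of _ "[]"]) (use 0 in \<open>auto intro!: eq_matI simp: diagm_def\<close>)
next
  case (Suc k H)
  let ?n = "Suc k"
  have H: "H \<in> carrier_mat ?n ?n" and sym: "transpose_mat H = H" by fact+
  obtain r where "poly (char_poly H) r = 0" using real_sym_has_root[OF H sym] by auto
  hence "eigenvalue H r" using eigenvalue_root_char_poly[OF H] by simp
  then obtain v where "eigenvector H v r" unfolding eigenvalue_def by blast
  hence v: "v \<in> carrier_vec ?n" "v \<noteq> 0\<^sub>v ?n" "H *\<^sub>v v = r \<cdot>\<^sub>v v"
    unfolding eigenvector_def using H by auto
  define w where "w = (1 / sqrt (v \<bullet> v)) \<cdot>\<^sub>v v"
  have vpos: "v \<bullet> v > 0" by (rule self_scalar_pos[OF v(1,2)])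
  have w: "w \<in> carrier_vec ?n" unfolding w_def using v by simp
  have ww: "w \<bullet> w = 1" unfolding w_def using v vpos
    by (simp add: smult_scalar_prod_distrib scalar_prod_smult_distrib)
  have Hw: "H *\<^sub>v w = r \<cdot>\<^sub>v w" unfolding w_def using v H
    by (simp add: mult_mat_vec smult_smult_assoc mult.commute)
  obtain W where W: "W \<in> carrier_mat ?n ?n" and WW: "transpose_mat W * W = 1\<^sub>m ?n" and W0: "col W 0 = w"
    using householder[OF w ww] by auto
  define C where "C = transpose_mat W * H * W"
  have C: "C \<in> carrier_mat ?n ?n" unfolding C_def using W H by auto
  have Cij: "C $$ (i,j) = col W i \<bullet> (H *\<^sub>v col W j)" if "i < ?n" "j < ?n" for i j
  proof -
    have "C = transpose_mat W * (H * W)" unfolding C_def using W H by (simp add: assoc_mult_mat)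
    thus ?thesis using that W H by (simp add: mult_mat_vec_def)
  qed
  have WWij: "col W i \<bullet> col W j = (if i = j then 1 else 0)" if "i < ?n" "j < ?n" for i j
  proof -
    have "(transpose_mat W * W) $$ (i,j) = col W i \<bullet> col W j" using that W by simp
    thus ?thesis using WW that by simp
  qed
  have C0: "C $$ (0,j) = (if j = 0 then r else 0)" if j: "j < ?n" for j
  proof -
    have "C $$ (0,j) = w \<bullet> (H *\<^sub>v col W j)" using Cij[OF _ j] W0 by simp
    also have "\<dots> = (transpose_mat H *\<^sub>v w) \<bullet> col W j"
      using transpose_vec_mult_scalar[OF H, of "col W j" w] W w j by simp
    also have "\<dots> = r * (w \<bullet> col W j)" using sym Hw W w j by simp
    also have "\<dots> = (if j = 0 then r else 0)" using WWij[of 0 j] W0 j by simp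
    finally show ?thesis .
  qed
  have Csym: "transpose_mat C = C"
  proof -
    have "transpose_mat C = transpose_mat W * transpose_mat (transpose_mat W * H)"
      unfolding C_def using W H by (subst transpose_mult) auto
    also have "\<dots> = transpose_mat W * (transpose_mat H * W)"
      using W H by (subst transpose_mult) auto
    also have "\<dots> = C" unfolding C_def using sym W H by (simp add: assoc_mult_mat)
    finally show ?thesis .
  qed
  have C0': "C $$ (i,0) = (if i = 0 then r else 0)" if i: "i < ?n" for i
  proof -
    have "C $$ (i,0) = transpose_mat C $$ (0,i)" using C i by simp
    thus ?thesis using Csym C0[OF i] by simp
  qed
  define H' where "H' = mat k k (\<lambda>(i,j). C $$ (Suc i, Suc j))"
  have H': "H' \<in> carrier_mat k k" unfolding H'_def by simp
  have H'sym: "transpose_mat H' = H'"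
  proof (rule eq_matI)
    fix i j assume "i < dim_row H'" "j < dim_col H'"
    hence "i < k" "j < k" unfolding H'_def by auto
    moreover have "C $$ (Suc j, Suc i) = transpose_mat C $$ (Suc i, Suc j)" using C \<open>i<k\<close> \<open>j<k\<close> by simp
    ultimately show "transpose_mat H' $$ (i,j) = H' $$ (i,j)" unfolding H'_def using Csym by simp
  qed (auto simp: H'_def)
  define R where "R = mat 1 1 (\<lambda>_. r)"
  have Cblock: "C = four_block_mat R (0\<^sub>m 1 k) (0\<^sub>m k 1) H'"
  proof (rule eq_matI)
    fix i j assume "i < dim_row (four_block_mat R (0\<^sub>m 1 k) (0\<^sub>m k 1) H')"
      "j < dim_col (four_block_mat R (0\<^sub>m 1 k) (0\<^sub>m k 1) H')"
    hence i: "i < ?n" and j: "j < ?n" by (auto simp: R_def H'_def)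
    show "C $$ (i,j) = four_block_mat R (0\<^sub>m 1 k) (0\<^sub>m k 1) H' $$ (i,j)"
      using i j C0 C0' by (cases i; cases j) (auto simp: R_def H'_def)
  qed (use C in \<open>auto simp: R_def H'_def\<close>)
  obtain U' es' where U': "U' \<in> carrier_mat k k" "length es' = k" "transpose_mat U' * U' = 1\<^sub>m k"
     "transpose_mat U' * H' * U' = diagm k es'"
    using Suc(1)[OF H' H'sym] by blast
  define B where "B = four_block_mat (1\<^sub>m 1) (0\<^sub>m 1 k) (0\<^sub>m k 1) U'"
  have B: "B \<in> carrier_mat ?n ?n" unfolding B_def using U' by auto
  have BT: "transpose_mat B = four_block_mat (1\<^sub>m 1) (0\<^sub>m 1 k) (0\<^sub>m k 1) (transpose_mat U')"
    unfolding B_def using U' by (subst transpose_four_block_mat) auto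
  define U where "U = W * B"
  have U: "U \<in> carrier_mat ?n ?n" unfolding U_def using W B by auto
  have UT: "transpose_mat U = transpose_mat B * transpose_mat W"
    unfolding U_def using W B by (simp add: transpose_mult)
  have BTc: "transpose_mat B \<in> carrier_mat ?n ?n" and WTc: "transpose_mat W \<in> carrier_mat ?n ?n"
    using B W by auto
  have "transpose_mat U * U = transpose_mat B * (transpose_mat W * W) * B"
    unfolding UT unfolding U_def
    using assoc_mult_mat[OF BTc WTc, of "W * B" ?n] assoc_mult_mat[OF WTc W B]
      assoc_mult_mat[OF BTc _ B, of "transpose_mat W * W"] W B by auto
  also have "\<dots> = transpose_mat B * B" using WW B by simp
  also have "\<dots> = four_block_mat (1\<^sub>m 1) (0\<^sub>m 1 k) (0\<^sub>m k 1) (transpose_mat U' * U')"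
  proof -
    have UTc: "transpose_mat U' \<in> carrier_mat k k" using U' by simp
    have "transpose_mat B * B = four_block_mat (1\<^sub>m 1 * 1\<^sub>m 1 + 0\<^sub>m 1 k * 0\<^sub>m k 1) (1\<^sub>m 1 * 0\<^sub>m 1 k + 0\<^sub>m 1 k * U')
       (0\<^sub>m k 1 * 1\<^sub>m 1 + transpose_mat U' * 0\<^sub>m k 1) (0\<^sub>m k 1 * 0\<^sub>m 1 k + transpose_mat U' * U')"
      unfolding BT unfolding B_def by (rule mult_four_block_mat) (use UTc U' in auto)
    also have "\<dots> = four_block_mat (1\<^sub>m 1) (0\<^sub>m 1 k) (0\<^sub>m k 1) (transpose_mat U' * U')"
      by (rule cong_four_block_mat) (use UTc U' in auto)
    finally show ?thesis .
  qed
  also have "\<dots> = 1\<^sub>m ?n" using U' by simp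
  finally have UU: "transpose_mat U * U = 1\<^sub>m ?n" .
  have WTH: "transpose_mat W * H \<in> carrier_mat ?n ?n" using W H by auto
  have "transpose_mat U * H * U = transpose_mat B * transpose_mat W * H * (W * B)"
    unfolding UT unfolding U_def ..
  also have "\<dots> = transpose_mat B * ((transpose_mat W * H) * (W * B))"
    using W B by (simp only: assoc_mult_mat[OF BTc WTc H] assoc_mult_mat[OF BTc WTH mult_carrier_mat[OF W B]])
  also have "\<dots> = transpose_mat B * (((transpose_mat W * H) * W) * B)"
    by (simp only: assoc_mult_mat[OF WTH W B])
  also have "\<dots> = transpose_mat B * C * B"
    by (simp only: C_def[symmetric] assoc_mult_mat[OF BTc C B])
  finally have "transpose_mat U * H * U = transpose_mat B * C * B" .
  also have "\<dots> = four_block_mat R (0\<^sub>m 1 k) (0\<^sub>m k 1) (transpose_mat U' * H' * U')"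
  proof -
    have Rc: "R \<in> carrier_mat 1 1" unfolding R_def by simp
    have UTc: "transpose_mat U' \<in> carrier_mat k k" using U' by simp
    have "transpose_mat B * C = four_block_mat (1\<^sub>m 1 * R + 0\<^sub>m 1 k * 0\<^sub>m k 1) (1\<^sub>m 1 * 0\<^sub>m 1 k + 0\<^sub>m 1 k * H')
       (0\<^sub>m k 1 * R + transpose_mat U' * 0\<^sub>m k 1) (0\<^sub>m k 1 * 0\<^sub>m 1 k + transpose_mat U' * H')"
      unfolding BT Cblock by (rule mult_four_block_mat) (use Rc UTc H' in auto)
    also have "\<dots> = four_block_mat R (0\<^sub>m 1 k) (0\<^sub>m k 1) (transpose_mat U' * H')"
      by (rule cong_four_block_mat) (use Rc UTc H' in auto)
    finally have e1: "transpose_mat B * C = four_block_mat R (0\<^sub>m 1 k) (0\<^sub>m k 1) (transpose_mat U' * H')" .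
    have UHc: "transpose_mat U' * H' \<in> carrier_mat k k" using UTc H' by simp
    have "transpose_mat B * C * B = four_block_mat (R * 1\<^sub>m 1 + 0\<^sub>m 1 k * 0\<^sub>m k 1) (R * 0\<^sub>m 1 k + 0\<^sub>m 1 k * U')
       (0\<^sub>m k 1 * 1\<^sub>m 1 + (transpose_mat U' * H') * 0\<^sub>m k 1) (0\<^sub>m k 1 * 0\<^sub>m 1 k + (transpose_mat U' * H') * U')"
      unfolding e1 unfolding B_def by (rule mult_four_block_mat) (use Rc UHc U' in auto)
    also have "\<dots> = four_block_mat R (0\<^sub>m 1 k) (0\<^sub>m k 1) (transpose_mat U' * H' * U')"
      by (rule cong_four_block_mat) (use Rc UHc U'(1) in auto)
    finally show ?thesis .
  qed
  also have "\<dots> = diagm ?n (r # es')"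
    unfolding U'(4) by (rule eq_matI) (auto simp: diagm_def R_def)
  finally have UHU: "transpose_mat U * H * U = diagm ?n (r # es')" .
  show ?case using U UU UHU U' by (intro exI[of _ U] exI[of _ "r # es'"]) auto
qed





definition dmat :: "nat \<Rightarrow> (nat \<Rightarrow> real) \<Rightarrow> real mat" where
  "dmat n d = mat n n (\<lambda>(i,j). if i = j then d i else 0)"

lemma kernel_exists:
  fixes A :: "real mat"
  assumes A: "A \<in> carrier_mat r c" and rc: "r < c"
  shows "\<exists>z \<in> carrier_vec c. z \<noteq> 0\<^sub>v c \<and> A *\<^sub>v z = 0\<^sub>v r"
proof -
  define B where "B = mat c c (\<lambda>(i,j). if i < r then A$$(i,j) else 0)"
  have B: "B \<in> carrier_mat c c" unfolding B_def by simp
  have "B = mat\<^sub>r c c (\<lambda>i. if i = c - 1 then 0\<^sub>v c else row B i)"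
    by (rule eq_matI) (use rc in \<open>auto simp: B_def\<close>)
  moreover have "det (mat\<^sub>r c c (\<lambda>i. if i = c - 1 then 0\<^sub>v c else row B i)) = 0"
    by (rule det_row_0) (use rc B in auto)
  ultimately have "det B = 0" by simp
  then obtain v where v: "v \<in> carrier_vec c" "v \<noteq> 0\<^sub>v c" "B *\<^sub>v v = 0\<^sub>v c"
    using det_0_iff_vec_prod_zero_field[OF B] by blast
  have "A *\<^sub>v v = 0\<^sub>v r"
  proof (rule eq_vecI)
    fix i assume "i < dim_vec (0\<^sub>v r)"
    hence i: "i < r" by simp
    have "(B *\<^sub>v v) $ i = 0" using v(3) i rc by simp
    moreover have "(B *\<^sub>v v) $ i = (A *\<^sub>v v) $ i"
      using i rc A B v(1) by (simp add: B_def scalar_prod_def)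
    ultimately show "(A *\<^sub>v v) $ i = 0\<^sub>v r $ i" using i by simp
  qed (use A in auto)
  thus ?thesis using v by blast
qed

lemma quad_form:
  fixes H X :: "real mat"
  assumes H: "H \<in> carrier_mat n n" and X: "X \<in> carrier_mat n n"
    and D: "transpose_mat X * H * X = dmat n d" and c: "c \<in> carrier_vec n"
  shows "(X *\<^sub>v c) \<bullet> (H *\<^sub>v (X *\<^sub>v c)) = (\<Sum>i<n. d i * (c$i)^2)"
proof -
  have "(X *\<^sub>v c) \<bullet> (H *\<^sub>v (X *\<^sub>v c)) = (H *\<^sub>v (X *\<^sub>v c)) \<bullet> (X *\<^sub>v c)"
    using H X c by (intro comm_scalar_prod[of _ n]) auto
  also have "\<dots> = (transpose_mat X *\<^sub>v (H *\<^sub>v (X *\<^sub>v c))) \<bullet> c"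
    using transpose_vec_mult_scalar[OF X c, of "H *\<^sub>v (X *\<^sub>v c)"] H X c by simp
  also have "transpose_mat X *\<^sub>v (H *\<^sub>v (X *\<^sub>v c)) = dmat n d *\<^sub>v c"
  proof -
    have XT: "transpose_mat X \<in> carrier_mat n n" using X by simp
    have HX: "H * X \<in> carrier_mat n n" using H X by simp
    show ?thesis unfolding D[symmetric]
      using assoc_mult_mat[OF XT H X] assoc_mult_mat_vec[OF XT HX c] assoc_mult_mat_vec[OF H X c] by simp
  qed
  also have "(dmat n d *\<^sub>v c) \<bullet> c = (\<Sum>i<n. d i * (c$i)^2)"
  proof -
    have "dmat n d *\<^sub>v c = vec n (\<lambda>i. d i * c$i)"
    proof (rule eq_vecI)
      fix i assume "i < dim_vec (vec n (\<lambda>i. d i * c $ i))"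
      hence i: "i < n" by simp
      have "(dmat n d *\<^sub>v c) $ i = (\<Sum>j = 0..<n. (if i = j then d i else 0) * c$j)"
        using i c by (simp add: dmat_def scalar_prod_def)
      also have "\<dots> = (\<Sum>j = 0..<n. if j = i then d i * c$j else 0)"
        by (intro sum.cong refl) auto
      also have "\<dots> = d i * c$i" using i by simp
      finally show "(dmat n d *\<^sub>v c) $ i = vec n (\<lambda>i. d i * c $ i) $ i" using i by simp
    qed (simp add: dmat_def)
    thus ?thesis using c by (simp add: scalar_prod_def power2_eq_square lessThan_atLeast0 mult.assoc)
  qed
  finally show ?thesis .
qed




lemma rows_zero:
  fixes rs :: "real vec list"
  assumes "set rs \<subseteq> carrier_vec N" and "z \<in> carrier_vec N"
    and "mat_of_rows N rs *\<^sub>v z = 0\<^sub>v (length rs)" and "r \<in> set rs"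
  shows "r \<bullet> z = 0"
proof -
  obtain k where k: "k < length rs" "rs ! k = r" using assms(4) by (metis in_set_conv_nth)
  have "(mat_of_rows N rs *\<^sub>v z) $ k = row (mat_of_rows N rs) k \<bullet> z" using k by simp
  also have "row (mat_of_rows N rs) k = r"
  proof -
    have "rs ! k \<in> carrier_vec N" using k(1) assms(1) nth_mem by blast
    thus ?thesis using mat_of_rows_row[OF k(1)] k(2) by simp
  qed
  finally show ?thesis using assms(3) k by simp
qed

lemma len_filter_upt: "length (filter P [0..<n]) = card {i. i < n \<and> P i}"
proof -
  have "length (filter P [0..<n]) = card {i. i < length [0..<n] \<and> P ([0..<n] ! i)}"
    by (rule length_filter_conv_card)
  also have "{i. i < length [0..<n] \<and> P ([0..<n] ! i)} = {i. i < n \<and> P i}" by auto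
  finally show ?thesis .
qed

lemma sylvester_le:
  fixes H X Y :: "real mat"
  assumes H: "H \<in> carrier_mat n n" and X: "X \<in> carrier_mat n n" and Y: "Y \<in> carrier_mat n n"
    and DX: "transpose_mat X * H * X = dmat n d" and DY: "transpose_mat Y * H * Y = dmat n f"
    and Yinj: "\<And>y. y \<in> carrier_vec n \<Longrightarrow> Y *\<^sub>v y = 0\<^sub>v n \<Longrightarrow> y = 0\<^sub>v n"
  shows "card {i. i < n \<and> d i > 0} \<le> card {i. i < n \<and> f i > 0}"
proof (rule ccontr)
  assume "\<not> ?thesis"
  hence lt: "card {i. i < n \<and> f i > 0} < card {i. i < n \<and> d i > 0}" by simp
  define N where "N = 2 * n"
  define rE :: "real vec list" where "rE = map (\<lambda>i. vec N (\<lambda>k. if k < n then X$$(i,k) else - Y$$(i,k-n))) [0..<n]"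
  define rC :: "real vec list" where "rC = map (\<lambda>i. unit_vec N i) (filter (\<lambda>i. \<not> d i > 0) [0..<n])"
  define rY :: "real vec list" where "rY = map (\<lambda>j. unit_vec N (n+j)) (filter (\<lambda>j. f j > 0) [0..<n])"
  define rs where "rs = rE @ rC @ rY"
  have cardle: "card {i. i < n \<and> d i > 0} \<le> n" by (rule order.trans[OF card_mono[of "{..<n}"]]) auto
  have lenC: "length rC = n - card {i. i < n \<and> d i > 0}"
  proof -
    have "length rC = card {i. i < n \<and> \<not> d i > 0}" unfolding rC_def by (simp add: len_filter_upt)
    also have "{i. i < n \<and> \<not> d i > 0} = {..<n} - {i. i < n \<and> d i > 0}" by auto
    also have "card \<dots> = n - card {i. i < n \<and> d i > 0}" by (subst card_Diff_subset) auto
    finally show ?thesis .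
  qed
  have lenY: "length rY = card {i. i < n \<and> f i > 0}" unfolding rY_def by (simp add: len_filter_upt)
  have len: "length rs < N" unfolding rs_def N_def rE_def using lenC lenY lt cardle by simp
  have rsc: "set rs \<subseteq> carrier_vec N" unfolding rs_def rE_def rC_def rY_def by auto
  have Ac: "mat_of_rows N rs \<in> carrier_mat (length rs) N" by simp
  obtain z where z: "z \<in> carrier_vec N" "z \<noteq> 0\<^sub>v N" "mat_of_rows N rs *\<^sub>v z = 0\<^sub>v (length rs)"
    using kernel_exists[OF Ac len] by blast
  have zr: "r \<bullet> z = 0" if "r \<in> set rs" for r using rows_zero[OF rsc z(1) z(3) that] .
  define c where "c = vec n (\<lambda>i. z$i)"
  define y where "y = vec n (\<lambda>j. z$(n+j))"
  have c: "c \<in> carrier_vec n" and y: "y \<in> carrier_vec n" unfolding c_def y_def by auto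
  have c0: "c$i = 0" if "i < n" "\<not> d i > 0" for i
  proof -
    have "unit_vec N i \<in> set rs" unfolding rs_def rC_def using that by auto
    hence "unit_vec N i \<bullet> z = 0" by (rule zr)
    thus ?thesis using that z(1) unfolding c_def N_def by (simp add: scalar_prod_left_unit)
  qed
  have y0: "y$j = 0" if "j < n" "f j > 0" for j
  proof -
    have "unit_vec N (n+j) \<in> set rs" unfolding rs_def rY_def using that by auto
    hence "unit_vec N (n+j) \<bullet> z = 0" by (rule zr)
    thus ?thesis using that z(1) unfolding y_def N_def by (simp add: scalar_prod_left_unit)
  qed
  have XY: "X *\<^sub>v c = Y *\<^sub>v y"
  proof (rule eq_vecI)
    fix i assume "i < dim_vec (Y *\<^sub>v y)"
    hence i: "i < n" using Y by simp
    define r where "r = vec N (\<lambda>k. if k < n then X$$(i,k) else - Y$$(i,k-n))"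
    have "r \<in> set rs" unfolding rs_def rE_def r_def using i by auto
    hence "r \<bullet> z = 0" by (rule zr)
    moreover have "r \<bullet> z = (\<Sum>k = 0..<N. r$k * z$k)" using z(1) unfolding r_def by (simp add: scalar_prod_def)
    moreover have "(\<Sum>k = 0..<N. r$k * z$k) = (\<Sum>k = 0..<n. r$k * z$k) + (\<Sum>k = n..<n+n. r$k * z$k)"
      unfolding N_def mult_2 by (subst sum.atLeastLessThan_concat) auto
    moreover have "(\<Sum>k = 0..<n. r$k * z$k) = (X *\<^sub>v c) $ i"
      using i X unfolding r_def c_def N_def by (simp add: scalar_prod_def)
    moreover have "(\<Sum>k = n..<n+n. r$k * z$k) = (\<Sum>k = 0..<n. r$(k+n) * z$(k+n))"
      using sum.shift_bounds_nat_ivl[of "\<lambda>k. r$k * z$k" 0 n n] by simp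
    moreover have "\<dots> = - (Y *\<^sub>v y) $ i"
      using i Y unfolding r_def y_def N_def by (simp add: scalar_prod_def sum_negf add.commute)
    ultimately show "(X *\<^sub>v c) $ i = (Y *\<^sub>v y) $ i" by simp
  qed (use X Y in auto)
  have qX: "(X *\<^sub>v c) \<bullet> (H *\<^sub>v (X *\<^sub>v c)) = (\<Sum>i<n. d i * (c$i)^2)" by (rule quad_form[OF H X DX c])
  have qY: "(Y *\<^sub>v y) \<bullet> (H *\<^sub>v (Y *\<^sub>v y)) = (\<Sum>i<n. f i * (y$i)^2)" by (rule quad_form[OF H Y DY y])
  have nnX: "d i * (c$i)^2 \<ge> 0" if "i < n" for i
    using c0[OF that] by (cases "d i > 0") auto
  have npY: "f i * (y$i)^2 \<le> 0" if "i < n" for i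
    using y0[OF that] by (cases "f i > 0") (auto simp: mult_nonpos_nonneg)
  have "(\<Sum>i<n. d i * (c$i)^2) = (\<Sum>i<n. f i * (y$i)^2)" using qX qY XY by simp
  moreover have "(\<Sum>i<n. d i * (c$i)^2) \<ge> 0" using nnX by (intro sum_nonneg) auto
  moreover have "(\<Sum>i<n. f i * (y$i)^2) \<le> 0" using npY by (intro sum_nonpos) auto
  ultimately have "(\<Sum>i<n. d i * (c$i)^2) = 0" by simp
  hence "\<forall>i\<in>{..<n}. d i * (c$i)^2 = 0" using nnX by (subst sum_nonneg_eq_0_iff[symmetric]) auto
  hence "c$i = 0" if "i < n" for i using c0[OF that] that by (cases "d i > 0") force+
  hence "c = 0\<^sub>v n" using c by (intro eq_vecI) auto
  moreover have "X *\<^sub>v 0\<^sub>v n = 0\<^sub>v n" using X by (intro eq_vecI) (auto simp: scalar_prod_def)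
  ultimately have "Y *\<^sub>v y = 0\<^sub>v n" using XY by simp
  hence "y = 0\<^sub>v n" using Yinj[OF y] by simp
  hence "z = 0\<^sub>v N"
  proof -
    assume y0': "y = 0\<^sub>v n"
    show ?thesis
    proof (rule eq_vecI)
      fix k assume "k < dim_vec (0\<^sub>v N)"
      hence k: "k < N" by simp
      show "z $ k = 0\<^sub>v N $ k"
      proof (cases "k < n")
        case True
        hence "c $ k = 0" using \<open>c = 0\<^sub>v n\<close> by simp
        thus ?thesis using True k unfolding c_def by simp
      next
        case False
        hence "y $ (k - n) = 0" using y0' k unfolding N_def by simp
        moreover have "n + (k - n) = k" using False by simp
        ultimately show ?thesis using False k unfolding y_def N_def by simp
      qed
    qed (use z in auto)
  qed
  with z(2) show False by simp
qed




lemma proots_lin: "proots (\<Prod>a\<leftarrow>es. [:- a, 1:]) = mset (es :: real list)"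
proof (induct es)
  case Nil thus ?case by simp
next
  case (Cons a es)
  have nz: "(\<Prod>a\<leftarrow>es. [:- a, 1:]) \<noteq> (0 :: real poly)"
    by (auto simp: prod_list_zero_iff)
  have "proots (\<Prod>a\<leftarrow>a # es. [:- a, 1:]) = proots [:- a, 1:] + proots (\<Prod>a\<leftarrow>es. [:- a, 1:])"
  proof -
    have "(\<Prod>a\<leftarrow>a # es. [:- a, 1:]) = [:- a, 1:] * (\<Prod>a\<leftarrow>es. [:- a, 1:])" by simp
    thus ?thesis by (simp only:) (rule proots_mult, use nz in auto)
  qed
  thus ?case using Cons by (simp add: proots_linear_factor)
qed

lemma smult_congr:
  fixes H X :: "real mat"
  assumes H: "H \<in> carrier_mat n n" and X: "X \<in> carrier_mat n n"
    and D: "transpose_mat X * H * X = dmat n d"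
  shows "transpose_mat X * ((-1) \<cdot>\<^sub>m H) * X = dmat n (\<lambda>i. - d i)"
proof -
  have XT: "transpose_mat X \<in> carrier_mat n n" using X by simp
  have "transpose_mat X * ((-1) \<cdot>\<^sub>m H) * X = (-1) \<cdot>\<^sub>m (transpose_mat X * H * X)"
    using mult_smult_distrib[OF XT H, of "-1"] mult_smult_assoc_mat[of "transpose_mat X * H" n n X n "-1"] H X by simp
  also have "\<dots> = dmat n (\<lambda>i. - d i)" unfolding D by (rule eq_matI) (auto simp: dmat_def)
  finally show ?thesis .
qed

lemma inertia:
  fixes H X :: "real mat"
  assumes H: "H \<in> carrier_mat n n" and sym: "transpose_mat H = H" and X: "X \<in> carrier_mat n n"
    and DX: "transpose_mat X * H * X = dmat n d" and nz: "\<And>i. i < n \<Longrightarrow> d i \<noteq> 0"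
  shows "pos_inertia H = card {i. i < n \<and> d i > 0} \<and> neg_inertia H = card {i. i < n \<and> d i < 0}"
proof -
  obtain U es where U: "U \<in> carrier_mat n n" and les: "length es = n" and UU: "transpose_mat U * U = 1\<^sub>m n"
    and UHU: "transpose_mat U * H * U = diagm n es"
    using spectral[OF H sym] by blast
  have UT: "transpose_mat U \<in> carrier_mat n n" using U by simp
  have DU: "transpose_mat U * H * U = dmat n (\<lambda>i. es ! i)" using UHU unfolding diagm_def dmat_def .
  have Uinj: "y = 0\<^sub>v n" if y: "y \<in> carrier_vec n" and Uy: "U *\<^sub>v y = 0\<^sub>v n" for y
  proof -
    have "y = (transpose_mat U * U) *\<^sub>v y" using UU y by simp
    also have "\<dots> = transpose_mat U *\<^sub>v (U *\<^sub>v y)" using assoc_mult_mat_vec[OF UT U y] .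
    also have "\<dots> = 0\<^sub>v n" unfolding Uy using UT by (intro eq_vecI) (auto simp: scalar_prod_def)
    finally show ?thesis .
  qed
  let ?D = "diagm n es"
  have Dc: "?D \<in> carrier_mat n n" unfolding diagm_def by simp
  have UUT: "U * transpose_mat U = 1\<^sub>m n" using mat_mult_left_right_inverse[OF UT U UU] .
  have "U * ?D * transpose_mat U = (U * transpose_mat U) * H * (U * transpose_mat U)"
  proof -
    have UTH: "transpose_mat U * H \<in> carrier_mat n n" using UT H by simp
    have "U * ?D * transpose_mat U = U * (transpose_mat U * H * U) * transpose_mat U" unfolding UHU ..
    also have "\<dots> = U * (transpose_mat U * H) * (U * transpose_mat U)"
      using assoc_mult_mat[OF U mult_carrier_mat[OF UTH U] UT] assoc_mult_mat[OF UTH U UT]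
        assoc_mult_mat[OF U UTH mult_carrier_mat[OF U UT]] by simp
    also have "\<dots> = (U * transpose_mat U) * H * (U * transpose_mat U)"
      using assoc_mult_mat[OF U UT H] by simp
    finally show ?thesis .
  qed
  also have "\<dots> = H" unfolding UUT using H by simp
  finally have HD: "H = U * ?D * transpose_mat U" by simp
  have "similar_mat H ?D" unfolding similar_mat_def similar_mat_wit_def
    by (rule exI[of _ U], rule exI[of _ "transpose_mat U"]) (use H U UT Dc UU UUT HD in auto)
  hence "char_poly H = char_poly ?D" by (rule char_poly_similar)
  also have "\<dots> = (\<Prod>a\<leftarrow>diag_mat ?D. [:- a, 1:])"
    by (rule char_poly_upper_triangular[OF Dc]) (auto simp: upper_triangular_def diagm_def)
  also have "diag_mat ?D = es" using les unfolding diag_mat_def diagm_def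
    by (intro nth_equalityI) auto
  finally have cp: "char_poly H = (\<Prod>a\<leftarrow>es. [:- a, 1:])" .
  have cnt: "size (filter_mset P (proots (char_poly H))) = card {i. i < n \<and> P (es ! i)}" for P
    unfolding cp proots_lin les[symmetric] by (simp flip: mset_filter add: length_filter_conv_card)
  have p1: "card {i. i < n \<and> d i > 0} \<le> card {i. i < n \<and> es ! i > 0}"
    by (rule sylvester_le[OF H X U DX DU Uinj])
  have H2: "(-1) \<cdot>\<^sub>m H \<in> carrier_mat n n" using H by simp
  have p2: "card {i. i < n \<and> - d i > 0} \<le> card {i. i < n \<and> - es ! i > 0}"
    by (rule sylvester_le[OF H2 X U smult_congr[OF H X DX] smult_congr[OF H U DU] Uinj])
  have "card {i. i < n \<and> es ! i > 0} + card {i. i < n \<and> es ! i < 0}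
      = card ({i. i < n \<and> es ! i > 0} \<union> {i. i < n \<and> es ! i < 0})"
    by (rule card_Un_disjoint[symmetric]) auto
  also have "\<dots> \<le> card {..<n}" by (rule card_mono) auto
  finally have e1: "card {i. i < n \<and> es ! i > 0} + card {i. i < n \<and> es ! i < 0} \<le> n" by simp
  have "card {i. i < n \<and> d i > 0} + card {i. i < n \<and> d i < 0}
      = card ({i. i < n \<and> d i > 0} \<union> {i. i < n \<and> d i < 0})"
    by (rule card_Un_disjoint[symmetric]) auto
  also have "{i. i < n \<and> d i > 0} \<union> {i. i < n \<and> d i < 0} = {..<n}"
    using nz by (auto simp: neq_iff)
  finally have e2: "card {i. i < n \<and> d i > 0} + card {i. i < n \<and> d i < 0} = n" by simp
  have p2': "card {i. i < n \<and> d i < 0} \<le> card {i. i < n \<and> es ! i < 0}" using p2 by simp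
  show ?thesis unfolding pos_inertia_def neg_inertia_def cnt using p1 p2' e1 e2 by linarith
qed




lemma pq_set_eq:
  assumes "m > 0"
  shows "pq_set p q m = (\<lambda>(k,l). p^k * q^l) ` ({0..<m} \<times> {0..<m})"
proof -
  have "k \<le> m - 1 \<longleftrightarrow> k < m" for k using assms by auto
  thus ?thesis unfolding pq_set_def image_def by fastforce
qed

lemma pq_cancel:
  fixes p q :: nat
  assumes "prime p" "prime q" "p \<noteq> q" "p^k * q^l = p^k' * q^l'"
  shows "k \<le> k'"
proof (rule ccontr)
  assume "\<not> k \<le> k'"
  hence "k = k' + (k - k')" "k - k' > 0" by auto
  hence "p^k' * (p^(k-k') * q^l) = p^k' * q^l'" using assms(4)
    by (metis mult.assoc power_add)
  hence "p^(k-k') * q^l = q^l'" using assms(1) by (simp add: prime_gt_0_nat)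
  hence "p dvd q^l'" using \<open>k - k' > 0\<close> by (metis dvd_mult2 dvd_power dvd_triv_left)
  hence "p dvd q" using assms(1) prime_dvd_power by blast
  thus False using assms by (metis primes_dvd_imp_eq)
qed

lemma pq_inj:
  fixes p q :: nat
  assumes "prime p" "prime q" "p \<noteq> q"
  shows "inj (\<lambda>(k,l). p^k * q^l)"
proof (rule injI, clarify)
  fix k l k' l' :: nat
  assume eq: "p^k * q^l = p^k' * q^l'"
  have "k \<le> k'" by (rule pq_cancel[OF assms eq])
  moreover have "k' \<le> k" by (rule pq_cancel[OF assms eq[symmetric]])
  ultimately have kk: "k = k'" by simp
  have eq': "q^l * p^k = q^l' * p^k'" using eq by (simp add: mult.commute)
  have "l \<le> l'" by (rule pq_cancel[OF assms(2,1) assms(3)[symmetric] eq'])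
  moreover have "l' \<le> l" by (rule pq_cancel[OF assms(2,1) assms(3)[symmetric] eq'[symmetric]])
  ultimately show "k = k' \<and> l = l'" using kk by simp
qed

lemma pq_lcm:
  fixes p q :: nat
  assumes "prime p" "prime q" "p \<noteq> q"
  shows "lcm (p^k * q^l) (p^k' * q^l') = p^(max k k') * q^(max l l')"
proof (rule dvd_antisym)
  have cop: "coprime (p^a) (q^b)" for a b
    using assms by (simp add: primes_coprime)
  show "lcm (p^k * q^l) (p^k' * q^l') dvd p^(max k k') * q^(max l l')"
    by (intro lcm_least mult_dvd_mono) (auto simp: le_imp_power_dvd)
  have "p^(max k k') dvd lcm (p^k * q^l) (p^k' * q^l')"
    by (cases "k \<le> k'") (auto simp: max_def intro: dvd_trans[OF _ dvd_lcm1] dvd_trans[OF _ dvd_lcm2])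
  moreover have "q^(max l l') dvd lcm (p^k * q^l) (p^k' * q^l')"
    by (cases "l \<le> l'") (auto simp: max_def intro: dvd_trans[OF _ dvd_lcm1] dvd_trans[OF _ dvd_lcm2])
  ultimately show "p^(max k k') * q^(max l l') dvd lcm (p^k * q^l) (p^k' * q^l')"
    by (rule divides_mult) (use cop[of "max k k'" "max l l'"] in simp_all)
qed




definition phi :: "nat \<Rightarrow> nat \<Rightarrow> nat \<Rightarrow> real" where
  "phi m a k = (if a = 0 then (if k = m - 1 then 1 else 0) else (if k = a then 1 else 0) - (if k = a - 1 then 1 else 0))"

definition alpha :: "nat \<Rightarrow> real \<Rightarrow> nat \<Rightarrow> real" where
  "alpha m x a = (if a = 0 then x^(m-1) else x^(a-1) - x^a)"

lemma collapse:
  assumes a: "a < m"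
  shows "(\<Sum>k<m. phi m a k * F k) = (if a = 0 then F (m-1) else F a - F (a-1))"
proof (cases "a = 0")
  case True
  hence "(\<Sum>k<m. phi m a k * F k) = (\<Sum>k<m. if k = m - 1 then F k else 0)"
    unfolding phi_def by (intro sum.cong) auto
  also have "\<dots> = F (m - 1)" using a by simp
  finally show ?thesis using True by simp
next
  case False
  hence "(\<Sum>k<m. phi m a k * F k) = (\<Sum>k<m. (if k = a then F k else 0) - (if k = a - 1 then F k else 0))"
    unfolding phi_def by (intro sum.cong) (auto simp: algebra_simps)
  also have "\<dots> = F a - F (a - 1)" using a by (simp add: sum_subtractf)
  finally show ?thesis using False by simp
qed

lemma gram1:
  assumes a: "a < m" and a': "a' < m"
  shows "(\<Sum>k<m. \<Sum>k'<m. phi m a k * x^(max k k') * phi m a' k') = (if a = a' then alpha m x a else 0)"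
proof -
  define D where "D = (\<lambda>b (F :: nat \<Rightarrow> real). if b = 0 then F (m-1) else F b - F (b-1))"
  have "(\<Sum>k<m. \<Sum>k'<m. phi m a k * x^(max k k') * phi m a' k')
      = (\<Sum>k<m. phi m a k * (\<Sum>k'<m. phi m a' k' * x^(max k k')))"
    by (simp add: sum_distrib_left mult_ac)
  also have "\<dots> = (\<Sum>k<m. phi m a k * D a' (\<lambda>k'. x^(max k k')))"
    unfolding D_def using collapse[OF a'] by simp
  also have "\<dots> = D a (\<lambda>k. D a' (\<lambda>k'. x^(max k k')))"
    unfolding D_def using collapse[OF a] by simp
  also have "\<dots> = (if a = a' then alpha m x a else 0)"
    unfolding D_def alpha_def using a a' by (auto simp: max_def) (rule arg_cong[where f="(^) x"], linarith)+
  finally show ?thesis .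
qed



lemma sep: fixes F G :: "nat \<Rightarrow> nat \<Rightarrow> real"
  assumes "finite A" "finite B"
  shows "(\<Sum>u\<in>A\<times>B. \<Sum>u'\<in>A\<times>B. F (fst u) (fst u') * G (snd u) (snd u'))
     = (\<Sum>k\<in>A. \<Sum>k'\<in>A. F k k') * (\<Sum>l\<in>B. \<Sum>l'\<in>B. G l l')"
proof -
  have "(\<Sum>u\<in>A\<times>B. \<Sum>u'\<in>A\<times>B. F (fst u) (fst u') * G (snd u) (snd u'))
      = (\<Sum>k\<in>A. \<Sum>l\<in>B. \<Sum>k'\<in>A. \<Sum>l'\<in>B. F k k' * G l l')"
  proof -
    have cp: "(\<Sum>u\<in>A\<times>B. h u) = (\<Sum>k\<in>A. \<Sum>l\<in>B. h (k,l))" for h :: "nat \<times> nat \<Rightarrow> real"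
      by (simp add: sum.cartesian_product)
    show ?thesis unfolding cp by simp
  qed
  also have "\<dots> = (\<Sum>k\<in>A. \<Sum>k'\<in>A. \<Sum>l\<in>B. \<Sum>l'\<in>B. F k k' * G l l')"
    by (intro sum.cong refl sum.swap)
  also have "\<dots> = (\<Sum>k\<in>A. \<Sum>k'\<in>A. F k k') * (\<Sum>l\<in>B. \<Sum>l'\<in>B. G l l')"
    unfolding sum_distrib_right unfolding sum_distrib_left ..
  finally show ?thesis .
qed
lemma triple: fixes X M :: "real mat"
  assumes X: "X \<in> carrier_mat n n" and M: "M \<in> carrier_mat n n" and s: "s < n" and t: "t < n"
  shows "(transpose_mat X * M * X) $$ (s,t) = (\<Sum>r<n. \<Sum>r'<n. X$$(r,s) * M$$(r,r') * X$$(r',t))"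
proof -
  have "(transpose_mat X * M * X) $$ (s,t) = (\<Sum>r<n. X$$(r,s) * (\<Sum>r'<n. M$$(r,r') * X$$(r',t)))"
    using X M s t by (simp add: scalar_prod_def lessThan_atLeast0)
  also have "\<dots> = (\<Sum>r<n. \<Sum>r'<n. X$$(r,s) * M$$(r,r') * X$$(r',t))"
    by (simp add: sum_distrib_left mult.assoc)
  finally show ?thesis .
qed



lemma card_pairs_pos:
  assumes "m > 0"
  shows "card {u \<in> {..<m} \<times> {..<m}. (fst u = 0) = (snd u = 0)} = (m - 1)^2 + 1"
proof -
  have "{u \<in> {..<m} \<times> {..<m}. (fst u = 0) = (snd u = 0)} = insert (0,0) ({1..<m} \<times> {1..<m})"
    using assms by auto
  also have "card \<dots> = (m - 1)^2 + 1" by (simp add: power2_eq_square)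
  finally show ?thesis .
qed

lemma card_pairs_neg:
  assumes "m > 0"
  shows "card {u \<in> {..<m} \<times> {..<m}. (fst u = 0) \<noteq> (snd u = 0)} = 2 * m - 2"
proof -
  have "{u \<in> {..<m} \<times> {..<m}. (fst u = 0) \<noteq> (snd u = 0)} = ({0} \<times> {1..<m}) \<union> ({1..<m} \<times> {0})"
    using assms by auto
  also have "card \<dots> = card ({0::nat} \<times> {1..<m}) + card ({1..<m} \<times> {0::nat})"
    by (rule card_Un_disjoint) auto
  also have "\<dots> = 2 * m - 2" by simp
  finally show ?thesis .
qed

lemma card_bij_filter:
  assumes "bij_betw \<sigma> {..<n} P"
  shows "card {s. s < n \<and> Q (\<sigma> s)} = card {u \<in> P. Q u}"
proof -
  have inj: "inj_on \<sigma> {s. s < n \<and> Q (\<sigma> s)}"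
    using assms unfolding bij_betw_def by (auto intro: inj_on_subset)
  have "\<sigma> ` {s. s < n \<and> Q (\<sigma> s)} = {u \<in> P. Q u}"
  proof
    show "\<sigma> ` {s. s < n \<and> Q (\<sigma> s)} \<subseteq> {u \<in> P. Q u}" using assms unfolding bij_betw_def by auto
    show "{u \<in> P. Q u} \<subseteq> \<sigma> ` {s. s < n \<and> Q (\<sigma> s)}"
    proof
      fix u assume "u \<in> {u \<in> P. Q u}"
      then obtain s where "s < n" "\<sigma> s = u" using assms unfolding bij_betw_def by (auto simp: image_iff)
      thus "u \<in> \<sigma> ` {s. s < n \<and> Q (\<sigma> s)}" using \<open>u \<in> _\<close> by auto
    qed
  qed
  thus ?thesis using card_image[OF inj] by simp
qed

lemma alpha_sign:
  fixes x :: real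
  assumes "x > 1" "a < m"
  shows "(alpha m x a > 0 \<longleftrightarrow> a = 0) \<and> (alpha m x a < 0 \<longleftrightarrow> a \<noteq> 0)"
proof (cases "a = 0")
  case True thus ?thesis using assms by (simp add: alpha_def)
next
  case False
  then obtain b where b: "a = Suc b" by (cases a) auto
  have "x^b < x^b * x" using assms by simp
  thus ?thesis using b by (simp add: alpha_def mult.commute)
qed

theorem lcm_inertia:
  fixes p q :: nat
  assumes pq: "prime p" "prime q" "p \<noteq> q" and m: "m > 1"
  shows "card (pq_set p q m) = m^2 \<and>
         pos_inertia (lcm_matrix (pq_set p q m)) = (m - 1)^2 + 1 \<and>
         neg_inertia (lcm_matrix (pq_set p q m)) = 2 * m - 2"
proof -
  define S where "S = pq_set p q m"
  define f :: "nat \<times> nat \<Rightarrow> nat" where "f = (\<lambda>(k,l). p^k * q^l)"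
  define P where "P = {..<m} \<times> {..<m}"
  have SP: "S = f ` P" unfolding S_def f_def P_def using pq_set_eq[of m p q] m
    by (simp add: lessThan_atLeast0)
  have injf: "inj_on f P" using pq_inj[OF pq] unfolding f_def by (rule inj_on_subset) simp
  have bijf: "bij_betw f P S" using SP injf by (simp add: bij_betw_def)
  have finS: "finite S" using SP P_def by simp
  have cardS: "card S = m^2" using card_image[OF injf] SP by (simp add: P_def power2_eq_square)
  define xs where "xs = sorted_list_of_set S"
  define n where "n = length xs"
  have n: "n = m^2" unfolding n_def xs_def using cardS by simp
  have bx: "bij_betw ((!) xs) {..<n} S"
    by (rule bij_betw_nth) (auto simp: xs_def n_def finS)
  define \<sigma> where "\<sigma> = the_inv_into P f \<circ> (!) xs"
  have bs: "bij_betw \<sigma> {..<n} P" unfolding \<sigma>_def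
    by (rule bij_betw_trans[OF bx bij_betw_the_inv_into[OF bijf]])
  have fs: "f (\<sigma> r) = xs ! r" if "r < n" for r
  proof -
    have "xs ! r \<in> S" using bx that unfolding bij_betw_def by auto
    thus ?thesis unfolding \<sigma>_def using f_the_inv_into_f[OF injf] SP by simp
  qed
  have sP: "\<sigma> r \<in> P" if "r < n" for r using bs that unfolding bij_betw_def by auto
  define K where "K = (\<lambda>r. fst (\<sigma> r))"
  define L where "L = (\<lambda>r. snd (\<sigma> r))"
  have KL: "K r < m" "L r < m" if "r < n" for r using sP[OF that] unfolding K_def L_def P_def by auto
  have xsr: "xs ! r = p^(K r) * q^(L r)" if "r < n" for r
    using fs[OF that] unfolding f_def K_def L_def by (simp add: case_prod_beta)
  define M where "M = lcm_matrix S"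
  have Mdef: "M = mat n n (\<lambda>(i,j). real (lcm (xs ! i) (xs ! j)))"
    unfolding M_def lcm_matrix_def xs_def n_def Let_def ..
  have Mc: "M \<in> carrier_mat n n" unfolding Mdef by simp
  have Mij: "M $$ (r,r') = real p ^ max (K r) (K r') * real q ^ max (L r) (L r')" if "r < n" "r' < n" for r r'
    unfolding Mdef using that xsr pq_lcm[OF pq] by simp
  have Msym: "transpose_mat M = M" unfolding Mdef by (rule eq_matI) (auto simp: lcm.commute)
  define X where "X = mat n n (\<lambda>(r,s). phi m (K s) (K r) * phi m (L s) (L r))"
  have Xc: "X \<in> carrier_mat n n" unfolding X_def by simp
  define d where "d = (\<lambda>s. alpha m (real p) (K s) * alpha m (real q) (L s))"
  have p1: "real p > 1" "real q > 1" using pq prime_gt_1_nat by auto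
  have DX: "transpose_mat X * M * X = dmat n d"
  proof (rule eq_matI)
    fix s t assume "s < dim_row (dmat n d)" "t < dim_col (dmat n d)"
    hence s: "s < n" and t: "t < n" by (auto simp: dmat_def)
    define g where "g = (\<lambda>u u'. phi m (K s) (fst u) * phi m (L s) (snd u) *
          (real p ^ max (fst u) (fst u') * real q ^ max (snd u) (snd u')) *
          (phi m (K t) (fst u') * phi m (L t) (snd u')))"
    have "(transpose_mat X * M * X) $$ (s,t) = (\<Sum>r<n. \<Sum>r'<n. X$$(r,s) * M$$(r,r') * X$$(r',t))"
      by (rule triple[OF Xc Mc s t])
    also have "\<dots> = (\<Sum>r<n. \<Sum>r'<n. g (\<sigma> r) (\<sigma> r'))"
      unfolding g_def X_def using s t Mij by (intro sum.cong refl) (auto simp: K_def L_def)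
    also have "\<dots> = (\<Sum>u\<in>P. \<Sum>u'\<in>P. g u u')"
      using sum.reindex_bij_betw[OF bs, of "\<lambda>u. \<Sum>u'\<in>P. g u u'"]
        sum.reindex_bij_betw[OF bs, of "g _"] by simp
    also have "\<dots> = (\<Sum>k<m. \<Sum>k'<m. phi m (K s) k * real p ^ max k k' * phi m (K t) k') *
                     (\<Sum>l<m. \<Sum>l'<m. phi m (L s) l * real q ^ max l l' * phi m (L t) l')"
      unfolding P_def g_def by (subst sep[symmetric]) (auto simp: mult_ac intro!: sum.cong)
    also have "\<dots> = (if K s = K t then alpha m (real p) (K s) else 0) *
                     (if L s = L t then alpha m (real q) (L s) else 0)"
      using gram1[OF KL(1)[OF s] KL(1)[OF t]] gram1[OF KL(2)[OF s] KL(2)[OF t]] by simp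
    also have "\<dots> = (if s = t then d s else 0)"
    proof -
      have "(K s = K t \<and> L s = L t) \<longleftrightarrow> s = t"
      proof
        assume "K s = K t \<and> L s = L t"
        hence "\<sigma> s = \<sigma> t" unfolding K_def L_def by (simp add: prod_eq_iff)
        thus "s = t" using bs s t unfolding bij_betw_def inj_on_def by auto
      qed auto
      thus ?thesis unfolding d_def by auto
    qed
    finally show "(transpose_mat X * M * X) $$ (s,t) = dmat n d $$ (s,t)" using s t by (simp add: dmat_def)
  qed (use Xc Mc in \<open>auto simp: dmat_def\<close>)
  have sgn: "(d s > 0 \<longleftrightarrow> (K s = 0) = (L s = 0)) \<and> (d s < 0 \<longleftrightarrow> (K s = 0) \<noteq> (L s = 0))" if s: "s < n" for s
    using alpha_sign[OF p1(1) KL(1)[OF s]] alpha_sign[OF p1(2) KL(2)[OF s]]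
    unfolding d_def by (auto simp: zero_less_mult_iff mult_less_0_iff)
  have nz: "d s \<noteq> 0" if "s < n" for s using sgn[OF that] by auto
  have inert: "pos_inertia M = card {s. s < n \<and> d s > 0} \<and> neg_inertia M = card {s. s < n \<and> d s < 0}"
    by (rule inertia[OF Mc Msym Xc DX nz])
  have "card {s. s < n \<and> d s > 0} = card {s. s < n \<and> (fst (\<sigma> s) = 0) = (snd (\<sigma> s) = 0)}"
    using sgn by (intro arg_cong[where f=card]) (auto simp: K_def L_def)
  also have "\<dots> = (m - 1)^2 + 1"
    using card_bij_filter[OF bs, of "\<lambda>u. (fst u = 0) = (snd u = 0)"] card_pairs_pos[of m] m
    unfolding P_def by simp
  finally have cp: "card {s. s < n \<and> d s > 0} = (m - 1)^2 + 1" .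
  have "card {s. s < n \<and> d s < 0} = card {s. s < n \<and> (fst (\<sigma> s) = 0) \<noteq> (snd (\<sigma> s) = 0)}"
    using sgn by (intro arg_cong[where f=card]) (auto simp: K_def L_def)
  also have "\<dots> = 2 * m - 2"
    using card_bij_filter[OF bs, of "\<lambda>u. (fst u = 0) \<noteq> (snd u = 0)"] card_pairs_neg[of m] m
    unfolding P_def by simp
  finally have cn: "card {s. s < n \<and> d s < 0} = 2 * m - 2" .
  show ?thesis using inert cp cn cardS unfolding M_def S_def by simp
qed




theorem mainTheorem15:
  fixes p q :: nat
  assumes "prime p" and "prime q" and "p \<noteq> q"
  shows "(\<forall>m::nat. m > 1 \<longrightarrow>
            card (pq_set p q m) = m ^ 2 \<and>
            neg_inertia (lcm_matrix (pq_set p q m)) = 2 * m - 2 \<and>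
            pos_inertia (lcm_matrix (pq_set p q m)) = (m - 1) ^ 2 + 1)
       \<and> (\<lambda>m. real (pos_inertia (lcm_matrix (pq_set p q m))) / real (card (pq_set p q m)))
            \<longlonglongrightarrow> 1"
proof
  show A: "\<forall>m::nat. m > 1 \<longrightarrow>
            card (pq_set p q m) = m ^ 2 \<and>
            neg_inertia (lcm_matrix (pq_set p q m)) = 2 * m - 2 \<and>
            pos_inertia (lcm_matrix (pq_set p q m)) = (m - 1) ^ 2 + 1"
    using lcm_inertia[OF assms] by blast
  have lim: "(\<lambda>m::nat. ((real m - 1)^2 + 1) / (real m)^2) \<longlonglongrightarrow> 1"
    by real_asymp
  have ev: "eventually (\<lambda>m. ((real m - 1)^2 + 1) / (real m)^2 =
      real (pos_inertia (lcm_matrix (pq_set p q m))) / real (card (pq_set p q m))) sequentially"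
  proof (rule eventually_sequentiallyI[of 2])
    fix m :: nat assume "2 \<le> m"
    hence "m > 1" by simp
    with A have "card (pq_set p q m) = m ^ 2" "pos_inertia (lcm_matrix (pq_set p q m)) = (m - 1) ^ 2 + 1"
      by auto
    moreover have "real ((m - 1)^2 + 1) = (real m - 1)^2 + 1" using \<open>m > 1\<close> by (simp add: of_nat_diff)
    ultimately show "((real m - 1)^2 + 1) / (real m)^2 =
      real (pos_inertia (lcm_matrix (pq_set p q m))) / real (card (pq_set p q m))" by simp
  qed
  show "(\<lambda>m. real (pos_inertia (lcm_matrix (pq_set p q m))) / real (card (pq_set p q m))) \<longlonglongrightarrow> 1"
    using tendsto_cong[OF ev] lim by simp
qed


end
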